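(* Assume the internal updates of the sensitive attribute are completely random: $P_{trans}(a,b)=1/|\mathrm{dom}(S)|$ for all $a,b\in\mathrm{dom}(S)$, so every sensitive value can update to every value, including itself. Let $t$ be a record whose versions $t'_1,\dots,t'_I$ appear in the releases published so far, with candidate sensitive sets $C_1,\dots,C_I$. Suppose a new release is published, in any way whatsoever, in which $t$ appears with candidate sensitive set $C_{I+1}$. For $1\le i\le I$, let $r(t'_i)$ be the disclosure risk of $t'_i$ computed from the feasible sub-SUG of $t$ with layers $1,\dots,I$, and let $r^{+}(t'_i)$ be the disclosure risk of $t'_i$ computed from the feasible sub-SUG of $t$ with layers $1,\dots,I+1$. Then $r^{+}(t'_i)=r(t'_i)$ for every $1\le i\le I$.
   Context: Data model. A microdata table is published repeatedly. Its records carry an identifier, quasi-identifier (QI) attributes and a sensitive attribute $S$ with a finite domain $\mathrm{dom}(S)$. Each published (generalized) table partitions its records, possibly including counterfeit records, into QI-groups. If a record $t$ appears in a release, its candidate sensitive set in that release is the set of sensitive values occurring in its QI-group; this set contains $t$'s actual sensitive value. The versions of $t$ are its records in the successive releases in which it appears, listed in order: $t'_1,\dots,t'_I$, with candidate sensitive sets $C_1,\dots,C_I$. Internal updates are governed by a publicly known transition probability $P_{trans}(a,b)\ge 0$ for $a,b\in\mathrm{dom}(S)$. Actual updates are feasible: $P_{trans}(t'_i[S],t'_{i+1}[S])>0$ for every $i$. Sensitive attribute update graph (SUG). The SUG of $t$ has, for each $i=1,\dots,I$, a layer $V_i=\{v_{i,s}: s\in C_i\}$ with one node per value of $C_i$.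 Each node has a weight $w(v_{i,s})>0$, its linking probability, and the weights in each layer sum to $1$; under the random-world assumption $w(v_{i,s})=1/|C_i|$. There is a directed edge $(v_{i,s},v_{i+1,s'})$ exactly when $P_{trans}(s,s')>0$, and its weight is $P_{trans}(s,s')$. Feasible sub-SUG. Obtain it from the SUG by repeatedly deleting a node, together with its incident edges, until no node can be deleted. A node is deleted if any of the following holds: it lies in $V_1$ and has no outgoing edge; it lies in $V_I$ and has no incoming edge; it lies in $V_i$ with $1<i<I$ and lacks an incoming edge or lacks an outgoing edge. When $I=1$, no node is deleted. Denote the remaining layers by $V'_i$. Disclosure risk. A feasible path is a path $p=(v'_{1,x_1},\dots,v'_{I,x_I})$ through the feasible sub-SUG with one node in each layer, where consecutive nodes are joined by edges. Its weight is $w(p)=w(v'_{I,x_I})\prod_{i=1}^{I-1} w(v'_{i,x_i})\,w(v'_{i,x_i},v'_{i+1,x_{i+1}})$. The disclosure risk of version $t'_i$ is the total weight of the feasible paths passing through the node of $V'_i$ that represents $t'_i[S]$, divided by the total weight of all feasible paths. *)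

theory Defs
  imports Complex_Main "HOL-Library.FuncSet"
begin

text \<open>Sensitive attribute update graph (SUG) of a record with candidate sensitive
sets C 1, ..., C I (layers indexed 1..I).
P is the transition probability P_trans; w i s is the weight (linking probability)
of node v_{i,s}.\<close>

definition sug_nodes :: "(nat \<Rightarrow> 'a set) \<Rightarrow> nat \<Rightarrow> (nat \<times> 'a) set" where
  "sug_nodes C I = {(i, s). 1 \<le> i \<and> i \<le> I \<and> s \<in> C i}"

definition sug_edge :: "('a \<Rightarrow> 'a \<Rightarrow> real) \<Rightarrow> (nat \<times> 'a) set \<Rightarrow> nat \<times> 'a \<Rightarrow> nat \<times> 'a \<Rightarrow> bool" where
  "sug_edge P V u v \<longleftrightarrow> u \<in> V \<and> v \<in> V \<and> fst v = Suc (fst u) \<and> P (snd u) (snd v) > 0"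

definition has_in :: "('a \<Rightarrow> 'a \<Rightarrow> real) \<Rightarrow> (nat \<times> 'a) set \<Rightarrow> nat \<times> 'a \<Rightarrow> bool" where
  "has_in P V v \<longleftrightarrow> (\<exists>u. sug_edge P V u v)"

definition has_out :: "('a \<Rightarrow> 'a \<Rightarrow> real) \<Rightarrow> (nat \<times> 'a) set \<Rightarrow> nat \<times> 'a \<Rightarrow> bool" where
  "has_out P V v \<longleftrightarrow> (\<exists>u. sug_edge P V v u)"

definition deletable :: "('a \<Rightarrow> 'a \<Rightarrow> real) \<Rightarrow> nat \<Rightarrow> (nat \<times> 'a) set \<Rightarrow> nat \<times> 'a \<Rightarrow> bool" where
  "deletable P I V v \<longleftrightarrow> v \<in> V \<and> 1 < I \<and>
     ((fst v = 1 \<and> \<not> has_out P V v) \<or>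
      (fst v = I \<and> \<not> has_in P V v) \<or>
      (1 < fst v \<and> fst v < I \<and> (\<not> has_in P V v \<or> \<not> has_out P V v)))"

definition del_step :: "('a \<Rightarrow> 'a \<Rightarrow> real) \<Rightarrow> nat \<Rightarrow> (nat \<times> 'a) set \<Rightarrow> (nat \<times> 'a) set \<Rightarrow> bool" where
  "del_step P I V V' \<longleftrightarrow> (\<exists>v. deletable P I V v \<and> V' = V - {v})"

definition feasible_sub_sug :: "('a \<Rightarrow> 'a \<Rightarrow> real) \<Rightarrow> (nat \<Rightarrow> 'a set) \<Rightarrow> nat \<Rightarrow> (nat \<times> 'a) set" where
  "feasible_sub_sug P C I =
     (THE V'. (del_step P I)\<^sup>*\<^sup>* (sug_nodes C I) V' \<and> \<not> (\<exists>v. deletable P I V' v))"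

definition feasible_paths :: "('a \<Rightarrow> 'a \<Rightarrow> real) \<Rightarrow> (nat \<Rightarrow> 'a set) \<Rightarrow> nat \<Rightarrow> (nat \<Rightarrow> 'a) set" where
  "feasible_paths P C I =
     {x. x \<in> extensional {1..I} \<and>
         (\<forall>i\<in>{1..I}. (i, x i) \<in> feasible_sub_sug P C I) \<and>
         (\<forall>i. 1 \<le> i \<and> i < I \<longrightarrow>
              sug_edge P (feasible_sub_sug P C I) (i, x i) (Suc i, x (Suc i)))}"

definition path_weight :: "('a \<Rightarrow> 'a \<Rightarrow> real) \<Rightarrow> (nat \<Rightarrow> 'a \<Rightarrow> real) \<Rightarrow> nat \<Rightarrow> (nat \<Rightarrow> 'a) \<Rightarrow> real" where
  "path_weight P w I x = w I (x I) * (\<Prod>i\<in>{1..<I}. w i (x i) * P (x i) (x (Suc i)))"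

definition disclosure_risk :: "('a \<Rightarrow> 'a \<Rightarrow> real) \<Rightarrow> (nat \<Rightarrow> 'a set) \<Rightarrow> (nat \<Rightarrow> 'a \<Rightarrow> real) \<Rightarrow> nat \<Rightarrow> nat \<Rightarrow> 'a \<Rightarrow> real" where
  "disclosure_risk P C w I i s =
     (\<Sum>x\<in>{x \<in> feasible_paths P C I. x i = s}. path_weight P w I x) /
     (\<Sum>x\<in>feasible_paths P C I. path_weight P w I x)"

end

theory Submission
  imports Defs
begin

lemma fss_eq:
  fixes D :: "'a set" and P :: "'a \<Rightarrow> 'a \<Rightarrow> real"
  assumes pos: "\<forall>a\<in>D. \<forall>b\<in>D. P a b > 0"
    and CD: "\<forall>i\<in>{1..J}. C i \<subseteq> D \<and> C i \<noteq> {}"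
  shows "feasible_sub_sug P C J = sug_nodes C J"
proof -
  have nd: "\<not> deletable P J (sug_nodes C J) v" for v
  proof
    assume d: "deletable P J (sug_nodes C J) v"
    obtain i s where v: "v = (i, s)" by (cases v)
    from d v have i: "1 \<le> i" "i \<le> J" "s \<in> C i" "1 < J"
      by (auto simp: deletable_def sug_nodes_def)
    have out: "has_out P (sug_nodes C J) v" if "i < J"
    proof -
      from CD that i obtain s' where s': "s' \<in> C (Suc i)" by fastforce
      have "sug_edge P (sug_nodes C J) v (Suc i, s')"
      proof -
        have "s \<in> D" using CD i by auto
        moreover have "s' \<in> D" using CD s' i that by (meson Suc_leI atLeastAtMost_iff le_SucI subsetD)
        ultimately have "P s s' > 0" using pos by blast
        thus ?thesis using s' i that unfolding sug_edge_def sug_nodes_def v by simp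
      qed
      thus ?thesis unfolding has_out_def by blast
    qed
    have inn: "has_in P (sug_nodes C J) v" if "1 < i"
    proof -
      define j where "j = i - 1"
      have j: "i = Suc j" "1 \<le> j" using that unfolding j_def by auto
      from CD j i obtain s' where s': "s' \<in> C j" by fastforce
      have "sug_edge P (sug_nodes C J) (j, s') v"
      proof -
        have "s \<in> D" using CD i by auto
        moreover have "s' \<in> D" using CD s' i j by auto
        ultimately have "P s' s > 0" using pos by blast
        thus ?thesis using s' i j unfolding sug_edge_def sug_nodes_def v by simp
      qed
      thus ?thesis unfolding has_in_def by blast
    qed
    have "\<not> (fst v = 1 \<and> \<not> has_out P (sug_nodes C J) v)" using out v i by auto
    moreover have "\<not> (fst v = J \<and> \<not> has_in P (sug_nodes C J) v)" using inn v i by auto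
    moreover have "\<not> (1 < fst v \<and> fst v < J \<and> (\<not> has_in P (sug_nodes C J) v \<or> \<not> has_out P (sug_nodes C J) v))"
      using inn out v by auto
    ultimately show False using d unfolding deletable_def by blast
  qed
  have "V' = sug_nodes C J" if "(del_step P J)\<^sup>*\<^sup>* (sug_nodes C J) V'" for V'
    using that
  proof (induction rule: rtranclp_induct)
    case base then show ?case by simp
  next
    case (step y z) thus ?case using nd unfolding del_step_def by auto
  qed
  hence "\<And>V'. (del_step P J)\<^sup>*\<^sup>* (sug_nodes C J) V' \<and> \<not> (\<exists>v. deletable P J V' v) \<Longrightarrow> V' = sug_nodes C J"
    by blast
  moreover have "(del_step P J)\<^sup>*\<^sup>* (sug_nodes C J) (sug_nodes C J) \<and> \<not> (\<exists>v. deletable P J (sug_nodes C J) v)"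
    using nd by auto
  ultimately show ?thesis unfolding feasible_sub_sug_def by (rule the_equality[rotated])
qed

lemma fp_eq:
  fixes D :: "'a set" and P :: "'a \<Rightarrow> 'a \<Rightarrow> real"
  assumes pos: "\<forall>a\<in>D. \<forall>b\<in>D. P a b > 0"
    and CD: "\<forall>i\<in>{1..J}. C i \<subseteq> D \<and> C i \<noteq> {}"
  shows "feasible_paths P C J = PiE {1..J} C"
proof -
  have F: "feasible_sub_sug P C J = sug_nodes C J" using fss_eq[OF pos CD] .
  show ?thesis
  proof (rule set_eqI, rule iffI)
    fix x assume "x \<in> feasible_paths P C J"
    thus "x \<in> PiE {1..J} C" unfolding feasible_paths_def F sug_nodes_def PiE_def by auto
  next
    fix x assume x: "x \<in> PiE {1..J} C"
    have "sug_edge P (sug_nodes C J) (i, x i) (Suc i, x (Suc i))" if "1 \<le> i" "i < J" for i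
    proof -
      have a: "x i \<in> C i" "x (Suc i) \<in> C (Suc i)" using x that by auto
      moreover have "x i \<in> D" "x (Suc i) \<in> D" using a CD that by auto
      ultimately show ?thesis using pos that unfolding sug_edge_def sug_nodes_def by auto
    qed
    thus "x \<in> feasible_paths P C J" using x unfolding feasible_paths_def F sug_nodes_def
      by (auto simp: PiE_def)
  qed
qed

lemma risk_eq:
  fixes D :: "'a set" and P :: "'a \<Rightarrow> 'a \<Rightarrow> real"
  assumes fin: "finite D"
    and Pc: "\<forall>a\<in>D. \<forall>b\<in>D. P a b = c" and c: "c > 0"
    and CD: "\<forall>i\<in>{1..J}. C i \<subseteq> D \<and> C i \<noteq> {}"
    and W: "\<forall>i\<in>{1..J}. (\<Sum>s\<in>C i. w i s) = 1"
    and J: "1 \<le> J" and k: "k \<in> {1..J}" and s: "s \<in> C k"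
  shows "disclosure_risk P C w J k s = w k s"
proof -
  have pos: "\<forall>a\<in>D. \<forall>b\<in>D. P a b > 0" using Pc c by auto
  have FP: "feasible_paths P C J = PiE {1..J} C" using fp_eq[OF pos CD] .
  have finC: "finite (C i)" if "i \<in> {1..J}" for i using CD that fin finite_subset by blast
  have PW: "path_weight P w J x = c ^ (J - 1) * (\<Prod>i\<in>{1..J}. w i (x i))"
    if x: "x \<in> PiE {1..J} C" for x
  proof -
    have "(\<Prod>i\<in>{1..<J}. w i (x i) * P (x i) (x (Suc i))) = (\<Prod>i\<in>{1..<J}. w i (x i) * c)"
    proof (rule prod.cong)
      fix i assume "i \<in> {1..<J}"
      hence i1: "i \<in> {1..J}" "Suc i \<in> {1..J}" by auto
      hence "x i \<in> C i" "x (Suc i) \<in> C (Suc i)" using x by (auto simp: PiE_def Pi_def)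
      hence "x i \<in> D" "x (Suc i) \<in> D" using CD i1 by blast+
      thus "w i (x i) * P (x i) (x (Suc i)) = w i (x i) * c" using Pc by auto
    qed simp
    also have "\<dots> = (\<Prod>i\<in>{1..<J}. w i (x i)) * c ^ (J - 1)"
      by (simp add: prod.distrib)
    finally have "path_weight P w J x = w J (x J) * ((\<Prod>i\<in>{1..<J}. w i (x i)) * c ^ (J - 1))"
      unfolding path_weight_def by simp
    moreover have "{1..J} = insert J {1..<J}" using J by auto
    ultimately show ?thesis by simp
  qed
  define C' where "C' = C(k := {s})"
  have sub: "{x \<in> PiE {1..J} C. x k = s} = PiE {1..J} C'"
  proof (rule set_eqI)
    fix x
    show "x \<in> {x \<in> PiE {1..J} C. x k = s} \<longleftrightarrow> x \<in> PiE {1..J} C'"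
      using k s unfolding C'_def PiE_iff by (auto split: if_splits)
  qed
  have finC': "finite (C' i)" if "i \<in> {1..J}" for i using finC[OF that] unfolding C'_def by auto
  have num: "(\<Sum>x\<in>{x \<in> feasible_paths P C J. x k = s}. path_weight P w J x)
      = c ^ (J - 1) * (\<Prod>i\<in>{1..J}. \<Sum>y\<in>C' i. w i y)"
  proof -
    have "{x \<in> feasible_paths P C J. x k = s} = PiE {1..J} C'" using FP sub by simp
    hence "(\<Sum>x\<in>{x \<in> feasible_paths P C J. x k = s}. path_weight P w J x)
        = (\<Sum>x\<in>PiE {1..J} C'. path_weight P w J x)" by simp
    also have "\<dots> = (\<Sum>x\<in>PiE {1..J} C'. c ^ (J - 1) * (\<Prod>i\<in>{1..J}. w i (x i)))"
    proof (rule sum.cong[OF refl])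
      fix x assume "x \<in> PiE {1..J} C'"
      hence "x \<in> PiE {1..J} C" using sub by blast
      thus "path_weight P w J x = c ^ (J - 1) * (\<Prod>i\<in>{1..J}. w i (x i))" by (rule PW)
    qed
    also have "\<dots> = c ^ (J - 1) * (\<Sum>x\<in>PiE {1..J} C'. (\<Prod>i\<in>{1..J}. w i (x i)))"
      by (simp add: sum_distrib_left)
    also have "\<dots> = c ^ (J - 1) * (\<Prod>i\<in>{1..J}. \<Sum>y\<in>C' i. w i y)"
    proof -
      have eq: "(\<Prod>i\<in>{1..J}. \<Sum>y\<in>C' i. w i y) = (\<Sum>g\<in>PiE {1..J} C'. \<Prod>i\<in>{1..J}. w i (g i))"
        by (rule prod_sum_PiE) (auto intro: finC')
      show ?thesis by (simp only: eq)
    qed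
    finally show ?thesis .
  qed
  have den: "(\<Sum>x\<in>feasible_paths P C J. path_weight P w J x)
      = c ^ (J - 1) * (\<Prod>i\<in>{1..J}. \<Sum>y\<in>C i. w i y)"
  proof -
    have "(\<Sum>x\<in>feasible_paths P C J. path_weight P w J x)
        = (\<Sum>x\<in>PiE {1..J} C. c ^ (J - 1) * (\<Prod>i\<in>{1..J}. w i (x i)))"
      unfolding FP by (rule sum.cong[OF refl]) (rule PW)
    also have "\<dots> = c ^ (J - 1) * (\<Sum>x\<in>PiE {1..J} C. (\<Prod>i\<in>{1..J}. w i (x i)))"
      by (simp add: sum_distrib_left)
    also have "\<dots> = c ^ (J - 1) * (\<Prod>i\<in>{1..J}. \<Sum>y\<in>C i. w i y)"
    proof -
      have eq: "(\<Prod>i\<in>{1..J}. \<Sum>y\<in>C i. w i y) = (\<Sum>g\<in>PiE {1..J} C. \<Prod>i\<in>{1..J}. w i (g i))"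
        by (rule prod_sum_PiE) (auto intro: finC)
      show ?thesis by (simp only: eq)
    qed
    finally show ?thesis .
  qed
  have p1: "(\<Prod>i\<in>{1..J}. \<Sum>y\<in>C i. w i y) = 1" using W by (simp add: prod.neutral)
  have p2: "(\<Prod>i\<in>{1..J}. \<Sum>y\<in>C' i. w i y) = w k s"
  proof -
    have "(\<Prod>i\<in>{1..J}. \<Sum>y\<in>C' i. w i y) = (\<Prod>i\<in>{1..J}. if i = k then w k s else 1)"
    proof (rule prod.cong[OF refl])
      fix i assume i: "i \<in> {1..J}"
      show "(\<Sum>y\<in>C' i. w i y) = (if i = k then w k s else 1)"
      proof (cases "i = k")
        case True thus ?thesis by (simp add: C'_def)
      next
        case False thus ?thesis using W i by (simp add: C'_def)
      qed
    qed
    also have "\<dots> = w k s" using k by (simp add: prod.delta)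
    finally show ?thesis .
  qed
  have "c ^ (J - 1) > 0" using c by simp
  thus ?thesis unfolding disclosure_risk_def num den p1 p2 using c by simp
qed

theorem lemma1:
  fixes D :: "'a set" and P :: "'a \<Rightarrow> 'a \<Rightarrow> real"
    and C :: "nat \<Rightarrow> 'a set" and w :: "nat \<Rightarrow> 'a \<Rightarrow> real"
    and x :: "nat \<Rightarrow> 'a" and I :: nat
  assumes "finite D" and "D \<noteq> {}"
    and "\<forall>a\<in>D. \<forall>b\<in>D. P a b = 1 / real (card D)"
    and "1 \<le> I"
    and "\<forall>i\<in>{1..Suc I}. C i \<subseteq> D \<and> x i \<in> C i"
    and "\<forall>i\<in>{1..Suc I}. (\<forall>s\<in>C i. w i s > 0) \<and> (\<Sum>s\<in>C i. w i s) = 1"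
    and "\<forall>i. 1 \<le> i \<and> i < Suc I \<longrightarrow> P (x i) (x (Suc i)) > 0"
  shows "\<forall>i\<in>{1..I}. disclosure_risk P C w (Suc I) i (x i) = disclosure_risk P C w I i (x i)"
proof
  fix i assume i: "i \<in> {1..I}"
  have "card D > 0" using assms(1,2) by (simp add: card_gt_0_iff)
  hence c: "1 / real (card D) > 0" by simp
  have CD1: "\<forall>j\<in>{1..Suc I}. C j \<subseteq> D \<and> C j \<noteq> {}" using assms(5) by blast
  have CD2: "\<forall>j\<in>{1..I}. C j \<subseteq> D \<and> C j \<noteq> {}" using CD1 by simp
  have W1: "\<forall>j\<in>{1..Suc I}. (\<Sum>s\<in>C j. w j s) = 1" using assms(6) by blast
  have W2: "\<forall>j\<in>{1..I}. (\<Sum>s\<in>C j. w j s) = 1" using W1 by simp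
  have xi: "x i \<in> C i" using assms(5) i by simp
  have "disclosure_risk P C w (Suc I) i (x i) = w i (x i)"
    by (rule risk_eq[OF assms(1) assms(3) c CD1 W1]) (use i xi in simp_all)
  moreover have "disclosure_risk P C w I i (x i) = w i (x i)"
    by (rule risk_eq[OF assms(1) assms(3) c CD2 W2]) (use i xi assms(4) in simp_all)
  ultimately show "disclosure_risk P C w (Suc I) i (x i) = disclosure_risk P C w I i (x i)" by simp
qed

end
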